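(* Let $n\ge 1$, let $\delta_t>0$, and let $\mathbf{K}\in\mathbb{R}^{n\times n}$ be a real symmetric matrix all of whose eigenvalues $\lambda_{\mathbf{K},1},\dots,\lambda_{\mathbf{K},n}$ are strictly positive; let $\overline{\lambda}_{\mathbf{K}}=\max_j \lambda_{\mathbf{K},j}$. Let $\mathbf{B}\in\mathbb{R}^n$ and let $\alpha,\beta\in\mathbb{R}$. Consider the discrete-time linear system (for $\mathbf{Y}[m]\in\mathbb{R}^n$, scalar input $y_d[m]$) $$\mathbf{Y}[m+1]=\mathbf{Y}[m]-\alpha\beta\delta_t\mathbf{K}\mathbf{Y}[m]+\alpha\beta\delta_t\mathbf{B}\,y_d[m]+(\mathbf{I}-\beta\mathbf{K})\big(\mathbf{Y}[m]-\mathbf{Y}[m-1]\big).$$ Then this system is (asymptotically) stable, i.e. every root $z$ of $$\det\Big(\mathbf{I}z^2-\big(\mathbf{I}-\alpha\beta\delta_t\mathbf{K}+(\mathbf{I}-\beta\mathbf{K})\big)z+(\mathbf{I}-\beta\mathbf{K})\Big)=0$$ satisfies $|z|<1$ (equivalently, for every eigenvalue $\lambda=\lambda_{\mathbf{K},k}$, both roots of $z^2-\big(1-\alpha\beta\delta_t\lambda+(1-\beta\lambda)\big)z+(1-\beta\lambda)=0$ lie in the open unit disk), if and only if $$\text{(i)}\ \ \alpha>0\qquad\text{and}\qquad \text{(ii)}\ \ 0<\beta<\frac{4}{\overline{\lambda}_{\mathbf{K}}\,(\alpha\delta_t+2)}.$$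
   Context: In the paper, $\mathbf{K}$ is the pinned Laplacian of a network of $n$ robots attached to a flexible object: $\mathbf{K}_{k,k}=\hat{k}_{k,d}+\sum_{m}\hat{k}_{k,m}$ and $\mathbf{K}_{k,j}=-\hat{k}_{k,j}$ for $k\neq j$, where $\hat{k}_{k,j}=\hat{k}_{j,k}\ge 0$ are effective stiffnesses (with $\hat{k}_{j,j}=0$) and $\hat{k}_{k,d}\ge0$ is nonzero only for leader robots; it is assumed to have real strictly positive eigenvalues. $\mathbf{B}$ has entries $B_k=\hat{k}_{k,d}$, $\mathbf{Y}$ is the vector of robot positions, $y_d$ the desired position, $\delta_t>0$ the sampling period, and $\alpha,\beta$ are the gains of the delayed-self-reinforcement update. Stability refers to the homogeneous recurrence (input $y_d$ irrelevant), i.e. all characteristic roots strictly inside the unit circle. *)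

theory Defs
  imports "HOL-Analysis.Analysis"
begin

definition real_eigenvalues :: "real^'n^'n \<Rightarrow> real set" where
  "real_eigenvalues K = {l. \<exists>v::real^'n. v \<noteq> 0 \<and> K *v v = l *s v}"

definition max_eigenvalue :: "real^'n^'n \<Rightarrow> real" where
  "max_eigenvalue K = Max (real_eigenvalues K)"

definition cmat :: "real^'n^'n \<Rightarrow> complex^'n^'n" where
  "cmat K = (\<chi> i j. complex_of_real (K $ i $ j))"

text \<open>The characteristic matrix polynomial of the second order recurrence
  Y[m+1] = Y[m] - a b dt K Y[m] + a b dt B yd[m] + (I - b K)(Y[m] - Y[m-1]):
  I z^2 - (I - a b dt K + (I - b K)) z + (I - b K).\<close>
definition dsr_char_matrix ::
  "real \<Rightarrow> real \<Rightarrow> real \<Rightarrow> real^'n^'n \<Rightarrow> complex \<Rightarrow> complex^'n^'n" where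
  "dsr_char_matrix a b dt K z =
     mat (z^2)
     - mat z ** (mat 1 - mat (complex_of_real (a * b * dt)) ** cmat K
                 + (mat 1 - mat (complex_of_real b) ** cmat K))
     + (mat 1 - mat (complex_of_real b) ** cmat K)"

definition dsr_stable :: "real \<Rightarrow> real \<Rightarrow> real \<Rightarrow> real^'n^'n \<Rightarrow> bool" where
  "dsr_stable a b dt K \<longleftrightarrow>
     (\<forall>z::complex. det (dsr_char_matrix a b dt K z) = 0 \<longrightarrow> cmod z < 1)"

end

theory Submission
  imports Defs
begin


lemma jury_if:
  fixes p q :: real and z :: complex
  assumes q1: "\<bar>q\<bar> < 1" and f1: "1 + p + q > 0" and fm1: "1 - p + q > 0"
    and root: "z^2 + of_real p * z + of_real q = 0"
  shows "cmod z < 1"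
proof -
  define x where "x = Re z"
  define y where "y = Im z"
  have z: "z = Complex x y" by (simp add: x_def y_def)
  have e1: "x^2 - y^2 + p*x + q = 0" and e2: "2*x*y + p*y = 0"
    using root unfolding z by (auto simp: complex_eq_iff power2_eq_square)
  show ?thesis
  proof (cases "y = 0")
    case True
    then have ex: "x^2 + p*x + q = 0" using e1 by simp
    define r where "r = -p - x"
    have xr: "x * r = q" using ex unfolding r_def by (simp add: algebra_simps power2_eq_square)
    have id1: "(1 - x) * (1 - r) = 1 + p + q" using xr unfolding r_def by (simp add: algebra_simps)
    have id2: "(1 + x) * (1 + r) = 1 - p + q" using xr unfolding r_def by (simp add: algebra_simps)
    have "\<bar>x\<bar> < 1"
    proof (rule ccontr)
      assume "\<not> \<bar>x\<bar> < 1"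
      hence "x \<ge> 1 \<or> x \<le> -1" by auto
      thus False
      proof
        assume x1: "x \<ge> 1"
        have "\<bar>r\<bar> * 1 \<le> \<bar>r\<bar> * \<bar>x\<bar>" using x1 by (intro mult_left_mono) auto
        also have "\<dots> = \<bar>q\<bar>" using xr by (metis abs_mult mult.commute)
        finally have "\<bar>r\<bar> < 1" using q1 by simp
        hence "(1 - x) * (1 - r) \<le> 0" using x1 by (intro mult_nonpos_nonneg) auto
        thus False using id1 f1 by simp
      next
        assume x1: "x \<le> -1"
        have "\<bar>r\<bar> * 1 \<le> \<bar>r\<bar> * \<bar>x\<bar>" using x1 by (intro mult_left_mono) auto
        also have "\<dots> = \<bar>q\<bar>" using xr by (metis abs_mult mult.commute)
        finally have "\<bar>r\<bar> < 1" using q1 by simp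
        hence "(1 + x) * (1 + r) \<le> 0" using x1 by (intro mult_nonpos_nonneg) auto
        thus False using id2 fm1 by simp
      qed
    qed
    thus ?thesis unfolding z using True by (simp add: cmod_def)
  next
    case False
    then have "p = -2*x" using e2
      by (metis add_eq_0_iff mult.commute mult_cancel_left mult_minus_left mult.assoc)
    then have "q = x^2 + y^2" using e1 by (simp add: algebra_simps power2_eq_square)
    then have "x^2 + y^2 < 1" using q1 by simp
    thus ?thesis unfolding z by (simp add: cmod_def)
  qed
qed

lemma jury_only_if:
  fixes p q :: real
  assumes st: "\<forall>z::complex. z^2 + of_real p * z + of_real q = 0 \<longrightarrow> cmod z < 1"
  shows "\<bar>q\<bar> < 1 \<and> 1 + p + q > 0 \<and> 1 - p + q > 0"
proof (cases "p^2 - 4*q < 0")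
  case True
  define w where "w = sqrt (4*q - p^2) / 2"
  have w2: "w^2 = q - p^2/4" unfolding w_def using True by (simp add: power_divide)
  define z where "z = Complex (-p/2) w"
  have "z^2 + of_real p * z + of_real q = 0"
    unfolding z_def using w2 by (simp add: complex_eq_iff power2_eq_square algebra_simps)
  hence "cmod z < 1" using st by blast
  hence "(-p/2)^2 + w^2 < 1" unfolding z_def cmod_def by simp
  hence qq: "q < 1" using w2 by (simp add: power_divide)
  have "0 \<le> (1 + p/2)^2" "0 \<le> (1 - p/2)^2" by simp_all
  thus ?thesis using qq True by (auto simp: power2_eq_square algebra_simps)
next
  case False
  define s where "s = sqrt (p^2 - 4*q)"
  have s2: "s^2 = p^2 - 4*q" unfolding s_def using False by simp
  define r1 where "r1 = (-p + s)/2"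
  define r2 where "r2 = (-p - s)/2"
  have "r1^2 + p*r1 + q = 0" unfolding r1_def using s2 by (simp add: power2_eq_square field_simps)
  hence "(of_real r1 :: complex)^2 + of_real p * of_real r1 + of_real q = 0"
    by (metis of_real_add of_real_mult of_real_power of_real_0)
  hence a1: "\<bar>r1\<bar> < 1" using st by fastforce
  have "r2^2 + p*r2 + q = 0" unfolding r2_def using s2 by (simp add: power2_eq_square field_simps)
  hence "(of_real r2 :: complex)^2 + of_real p * of_real r2 + of_real q = 0"
    by (metis of_real_add of_real_mult of_real_power of_real_0)
  hence a2: "\<bar>r2\<bar> < 1" using st by fastforce
  have q: "q = r1 * r2" unfolding r1_def r2_def using s2 by (simp add: power2_eq_square field_simps)
  have p: "p = -(r1 + r2)" unfolding r1_def r2_def by (simp add: field_simps)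
  have "\<bar>q\<bar> < 1" unfolding q abs_mult using a1 a2
    by (metis abs_ge_zero less_one mult_strict_mono' mult_1 less_le_trans order.refl abs_mult mult_le_one mult_strict_mono mult.right_neutral)
  moreover have "1 + p + q = (1 - r1) * (1 - r2)" unfolding p q by (simp add: algebra_simps)
  moreover have "1 - p + q = (1 + r1) * (1 + r2)" unfolding p q by (simp add: algebra_simps)
  moreover have "(1 - r1) * (1 - r2) > 0" "(1 + r1) * (1 + r2) > 0" using a1 a2 by auto
  ultimately show ?thesis by simp
qed



lemma det_zero_iff_ker:
  fixes A :: "'a::field^'n^'n"
  shows "det A = 0 \<longleftrightarrow> (\<exists>v. v \<noteq> 0 \<and> A *v v = 0)"
  using invertible_det_nz[of A] invertible_left_inverse[of A] matrix_left_invertible_ker[of A]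
  by blast

lemma sym_inner:
  fixes K :: "real^'n^'n"
  assumes "transpose K = K"
  shows "(K *v x) \<bullet> y = x \<bullet> (K *v y)"
proof -
  have s: "K $ i $ j = K $ j $ i" for i j
    using assms by (metis transpose_def vec_lambda_beta)
  have "(K *v x) \<bullet> y = (\<Sum>i\<in>UNIV. \<Sum>j\<in>UNIV. K$i$j * x$j * y$i)"
    by (simp add: inner_vec_def matrix_vector_mult_def sum_distrib_right sum_distrib_left mult.commute mult.left_commute)
  also have "\<dots> = (\<Sum>j\<in>UNIV. \<Sum>i\<in>UNIV. K$i$j * x$j * y$i)" by (rule sum.swap)
  also have "\<dots> = x \<bullet> (K *v y)"
    by (simp add: inner_vec_def matrix_vector_mult_def sum_distrib_left sum_distrib_right s mult.commute mult.left_commute)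
  finally show ?thesis .
qed

lemma mat_mv: "mat (c::'a::comm_ring_1) *v v = c *s v"
  by (simp add: vec_eq_iff matrix_vector_mult_def mat_def if_distrib[where f="\<lambda>t. t * _"] sum.delta cong: if_cong)

lemma mv_smult: "(A::'a::comm_ring_1^'n^'m) *v (c *s v) = c *s (A *v v)"
  by (simp add: vec_eq_iff matrix_vector_mult_def sum_distrib_left mult.left_commute)

lemma char_apply:
  "dsr_char_matrix a b dt K z *v v =
    ((z - 1)^2) *s v + (z * complex_of_real (a*b*dt + b) - complex_of_real b) *s (cmat K *v v)"
  unfolding dsr_char_matrix_def matrix_vector_mult_add_rdistrib matrix_vector_mult_diff_rdistrib
    matrix_vector_mul_assoc[symmetric] mat_mv matrix_vector_mul_lid mv_smult
    vector_ssub_ldistrib vector_add_ldistrib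
  by (simp add: vec_eq_iff power2_eq_square algebra_simps)



lemma eig_exists:
  fixes K :: "real^'n^'n"
  assumes sym: "transpose K = K"
  shows "real_eigenvalues K \<noteq> {}"
proof -
  define Q where "Q x = x \<bullet> (K *v x)" for x :: "real^'n"
  have cQ: "continuous_on (sphere 0 1) Q" unfolding Q_def
    by (intro continuous_intros)
  have ne: "sphere (0::real^'n) 1 \<noteq> {}"
    by (simp add: sphere_eq_empty)
  obtain v where v: "v \<in> sphere 0 1" and vmax: "\<And>y. y \<in> sphere 0 1 \<Longrightarrow> Q y \<le> Q v"
    using continuous_attains_sup[OF compact_sphere ne cQ] by blast
  define l where "l = Q v"
  have nv: "norm v = 1" using v by simp
  have vv: "v \<bullet> v = 1" using nv by (simp add: norm_eq_1)
  have Qs: "Q (c *\<^sub>R x) = c^2 * Q x" for c x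
    unfolding Q_def by (simp add: matrix_vector_mult_scaleR power2_eq_square)
  have bound: "Q x \<le> l * (x \<bullet> x)" for x
  proof (cases "x = 0")
    case True thus ?thesis by (simp add: Q_def)
  next
    case False
    hence nx: "norm x > 0" by simp
    have "(1/norm x) *\<^sub>R x \<in> sphere 0 1" using nx by simp
    hence "Q ((1/norm x) *\<^sub>R x) \<le> l" unfolding l_def by (rule vmax)
    hence "(1/norm x)^2 * Q x \<le> l" by (simp add: Qs)
    hence "Q x \<le> l * (norm x)^2" using nx by (simp add: field_simps power_divide)
    thus ?thesis by (simp add: power2_norm_eq_inner)
  qed
  define w where "w = l *\<^sub>R v - K *v v"
  define C where "C = l * (w \<bullet> w) - Q w"
  have C0: "C \<ge> 0" unfolding C_def using bound[of w] by simp
  have key: "Q (v + t *\<^sub>R w) = Q v + 2 * t * (w \<bullet> (K *v v)) + t^2 * Q w" for t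
  proof -
    have "w \<bullet> (K *v v) = v \<bullet> (K *v w)"
      using sym_inner[OF sym, of w v] by (simp add: inner_commute)
    thus ?thesis unfolding Q_def
      by (simp add: matrix_vector_right_distrib matrix_vector_mult_scaleR inner_add_left
          inner_add_right power2_eq_square algebra_simps inner_commute)
  qed
  have ineq: "0 \<le> 2 * t * (w \<bullet> w) + t^2 * C" for t
  proof -
    have "Q (v + t *\<^sub>R w) \<le> l * ((v + t *\<^sub>R w) \<bullet> (v + t *\<^sub>R w))" by (rule bound)
    moreover have e2: "(v + t *\<^sub>R w) \<bullet> (v + t *\<^sub>R w) = 1 + 2 * t * (v \<bullet> w) + t^2 * (w \<bullet> w)"
      using vv by (simp add: inner_add_left inner_add_right power2_eq_square algebra_simps inner_commute)
    moreover have e3: "w \<bullet> w = l * (v \<bullet> w) - w \<bullet> (K *v v)"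
      by (subst (2) w_def) (simp add: inner_diff_right inner_commute)
    ultimately have "l + 2 * t * (w \<bullet> (K *v v)) + t^2 * Q w \<le> l * (1 + 2 * t * (v \<bullet> w) + t^2 * (w \<bullet> w))"
      using key[of t] l_def by simp
    moreover have "l * (1 + 2 * t * (v \<bullet> w) + t^2 * (w \<bullet> w)) - (l + 2 * t * (w \<bullet> (K *v v)) + t^2 * Q w)
       = 2 * t * (w \<bullet> w) + t^2 * C"
      unfolding C_def e3[symmetric] by (simp add: algebra_simps e3)
    ultimately show ?thesis by linarith
  qed
  have "w \<bullet> w = 0"
  proof (rule ccontr)
    assume "w \<bullet> w \<noteq> 0"
    hence B: "w \<bullet> w > 0" by (simp add: order_le_neq_trans)
    define t where "t = - (w \<bullet> w) / (C + 1)"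
    have "2 * t * (w \<bullet> w) + t^2 * C = (w \<bullet> w)^2 / (C+1) * (C / (C+1) - 2)"
      using C0 B unfolding t_def by (simp add: add_nonneg_eq_0_iff power2_eq_square divide_simps) (simp add: algebra_simps)
    also have "\<dots> < 0"
    proof -
      have "C / (C+1) < 1" using C0 by simp
      hence "C / (C+1) - 2 < 0" by simp
      moreover have "(w \<bullet> w)^2 / (C+1) > 0" using B C0 by simp
      ultimately show ?thesis using mult_pos_neg by blast
    qed
    finally show False using ineq[of t] by simp
  qed
  hence "w = 0" by simp
  hence "K *v v = l *s v" unfolding w_def by (simp add: scalar_mult_eq_scaleR)
  moreover have "v \<noteq> 0" using nv by auto
  ultimately show ?thesis unfolding real_eigenvalues_def by blast
qed



lemma eig_finite:
  fixes K :: "real^'n^'n"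
  assumes sym: "transpose K = K"
  shows "finite (real_eigenvalues K)"
proof -
  let ?E = "real_eigenvalues K"
  define f where "f l = (SOME v. v \<noteq> 0 \<and> K *v v = l *\<^sub>R v)" for l
  have fP: "f l \<noteq> 0 \<and> K *v f l = l *\<^sub>R f l" if "l \<in> ?E" for l
  proof -
    from that obtain v where "v \<noteq> 0 \<and> K *v v = l *\<^sub>R v"
      unfolding real_eigenvalues_def by (auto simp: scalar_mult_eq_scaleR)
    thus ?thesis unfolding f_def by (rule someI)
  qed
  have orth: "f l \<bullet> f m = 0" if "l \<in> ?E" "m \<in> ?E" "l \<noteq> m" for l m
  proof -
    have "l * (f l \<bullet> f m) = (K *v f l) \<bullet> f m" using fP[OF that(1)] by simp
    also have "\<dots> = f l \<bullet> (K *v f m)" by (rule sym_inner[OF sym])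
    also have "\<dots> = m * (f l \<bullet> f m)" using fP[OF that(2)] by simp
    finally show ?thesis using that(3) by simp
  qed
  have inj: "inj_on f ?E"
  proof (rule inj_onI)
    fix l m assume "l \<in> ?E" "m \<in> ?E" "f l = f m"
    thus "l = m" using orth[of l m] fP[of l] by auto
  qed
  have "pairwise orthogonal (f ` ?E)"
    unfolding pairwise_def orthogonal_def using orth by auto
  moreover have "0 \<notin> f ` ?E" using fP by auto
  ultimately have "independent (f ` ?E)" by (rule pairwise_orthogonal_independent)
  hence "finite (f ` ?E)" using independent_bound by blast
  thus ?thesis using inj finite_imageD by blast
qed

lemma cplx_eig_real:
  fixes K :: "real^'n^'n" and v :: "complex^'n"
  assumes sym: "transpose K = K" and v0: "v \<noteq> 0" and ev: "cmat K *v v = mu *s v"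
  shows "\<exists>l \<in> real_eigenvalues K. mu = complex_of_real l"
proof -
  have s: "K $ i $ j = K $ j $ i" for i j
    using sym by (metis transpose_def vec_lambda_beta)
  have evi: "(\<Sum>j\<in>UNIV. complex_of_real (K$i$j) * v$j) = mu * v$i" for i
    using ev by (simp add: vec_eq_iff matrix_vector_mult_def cmat_def)
  define S where "S = (\<Sum>i\<in>UNIV. \<Sum>j\<in>UNIV. cnj (v$i) * complex_of_real (K$i$j) * v$j)"
  define N where "N = (\<Sum>i\<in>UNIV. cnj (v$i) * v$i)"
  have SN: "S = mu * N"
  proof -
    have "S = (\<Sum>i\<in>UNIV. cnj (v$i) * (\<Sum>j\<in>UNIV. complex_of_real (K$i$j) * v$j))"
      unfolding S_def by (simp add: sum_distrib_left mult.assoc)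
    also have "\<dots> = (\<Sum>i\<in>UNIV. mu * (cnj (v$i) * v$i))" using evi by (simp add: mult.left_commute)
    also have "\<dots> = mu * N" unfolding N_def by (simp add: sum_distrib_left)
    finally show ?thesis .
  qed
  have "cnj S = (\<Sum>i\<in>UNIV. \<Sum>j\<in>UNIV. v$i * complex_of_real (K$i$j) * cnj (v$j))"
    unfolding S_def by simp
  also have "\<dots> = (\<Sum>j\<in>UNIV. \<Sum>i\<in>UNIV. v$i * complex_of_real (K$i$j) * cnj (v$j))"
    by (rule sum.swap)
  also have "\<dots> = S" unfolding S_def
    by (intro sum.cong refl) (simp add: s mult.commute mult.left_commute)
  finally have cS: "cnj S = S" .
  have Nr: "N = complex_of_real (\<Sum>i\<in>UNIV. (cmod (v$i))^2)"
    unfolding N_def of_real_sum by (simp add: complex_norm_square mult.commute del: of_real_power)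
  obtain i0 where "v$i0 \<noteq> 0" using v0 by (auto simp: vec_eq_iff)
  hence "(\<Sum>i\<in>UNIV. (cmod (v$i))^2) > 0"
    by (intro sum_pos2[of UNIV i0]) auto
  then have "Im S = Im mu * (\<Sum>i\<in>UNIV. (cmod (v$i))^2)" "Im S = 0"
    using cS SN Nr by (auto simp: complex_eq_iff)
  hence imu: "Im mu = 0" using \<open>_ > 0\<close> by simp
  define x where "x = (\<chi> i. Re (v$i))"
  define y where "y = (\<chi> i. Im (v$i))"
  have "K *v x = Re mu *s x"
  proof -
    have "(K *v x)$i = Re mu * x$i" for i
    proof -
      have "(K *v x)$i = Re (\<Sum>j\<in>UNIV. complex_of_real (K$i$j) * v$j)"
        by (simp add: matrix_vector_mult_def x_def Re_sum)
      also have "\<dots> = Re mu * x$i" using evi[of i] imu by (simp add: x_def)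
      finally show ?thesis .
    qed
    thus ?thesis by (simp add: vec_eq_iff)
  qed
  moreover have "K *v y = Re mu *s y"
  proof -
    have "(K *v y)$i = Re mu * y$i" for i
    proof -
      have "(K *v y)$i = Im (\<Sum>j\<in>UNIV. complex_of_real (K$i$j) * v$j)"
        by (simp add: matrix_vector_mult_def y_def Im_sum)
      also have "\<dots> = Re mu * y$i" using evi[of i] imu by (simp add: y_def)
      finally show ?thesis .
    qed
    thus ?thesis by (simp add: vec_eq_iff)
  qed
  moreover have "x \<noteq> 0 \<or> y \<noteq> 0"
    using \<open>v$i0 \<noteq> 0\<close> by (auto simp: x_def y_def vec_eq_iff complex_eq_iff)
  ultimately have "Re mu \<in> real_eigenvalues K" unfolding real_eigenvalues_def by blast
  moreover have "mu = complex_of_real (Re mu)" using imu by (simp add: complex_eq_iff)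
  ultimately show ?thesis by blast
qed



lemma char_roots:
  fixes K :: "real^'n^'n"
  assumes sym: "transpose K = K"
  shows "det (dsr_char_matrix a b dt K z) = 0 \<longleftrightarrow>
    (\<exists>l \<in> real_eigenvalues K. z^2 + complex_of_real (l*(a*b*dt + b) - 2) * z + complex_of_real (1 - l*b) = 0)"
  (is "?L \<longleftrightarrow> ?R")
proof
  define s where "s = z * complex_of_real (a*b*dt + b) - complex_of_real b"
  have scal: "z^2 + complex_of_real (l*(a*b*dt + b) - 2) * z + complex_of_real (1 - l*b)
      = (z - 1)^2 + complex_of_real l * s" for l
    unfolding s_def by (simp add: power2_eq_square algebra_simps)
  assume ?L
  then obtain v where v0: "v \<noteq> 0" and Mv: "dsr_char_matrix a b dt K z *v v = 0"
    using det_zero_iff_ker by blast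
  have eq: "((z - 1)^2) *s v + s *s (cmat K *v v) = 0"
    using Mv unfolding char_apply s_def .
  obtain i0 where i0: "v$i0 \<noteq> 0" using v0 by (auto simp: vec_eq_iff)
  show ?R
  proof (cases "s = 0")
    case True
    hence "(z - 1)^2 * v$i0 = 0" using eq by (auto simp: vec_eq_iff dest: spec[of _ i0])
    hence z1: "z = 1" using i0 by simp
    hence "complex_of_real (a*b*dt) = 0" using True unfolding s_def by simp
    hence c0: "a*b*dt = 0" by simp
    obtain l where "l \<in> real_eigenvalues K" using eig_exists[OF sym] by blast
    moreover have "z^2 + complex_of_real (l*(a*b*dt + b) - 2) * z + complex_of_real (1 - l*b) = 0"
      unfolding z1 using c0 by (auto simp: algebra_simps)
    ultimately show ?thesis by blast
  next
    case False
    have "cmat K *v v = (- ((z - 1)^2) / s) *s v"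
    proof -
      have "s *s (cmat K *v v) = (- ((z-1)^2)) *s v" using eq
        by (simp add: vec_eq_iff algebra_simps) (metis add.commute add_eq_0_iff)
      hence "(1/s) *s (s *s (cmat K *v v)) = (1/s) *s ((- ((z-1)^2)) *s v)" by simp
      thus ?thesis using False by (simp add: vector_smult_assoc)
    qed
    from cplx_eig_real[OF sym v0 this] obtain l where l: "l \<in> real_eigenvalues K"
      and lm: "- ((z - 1)^2) / s = complex_of_real l" by blast
    have "(z - 1)^2 + complex_of_real l * s = 0"
      using lm False by (simp add: field_simps) (metis add.commute neg_eq_iff_add_eq_0)
    thus ?thesis using l scal by metis
  qed
next
  assume ?R
  then obtain l where l: "l \<in> real_eigenvalues K"
    and r: "z^2 + complex_of_real (l*(a*b*dt + b) - 2) * z + complex_of_real (1 - l*b) = 0" by blast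
  from l obtain w where w0: "w \<noteq> 0" and Kw: "K *v w = l *s w"
    unfolding real_eigenvalues_def by blast
  define v where "v = (\<chi> i. complex_of_real (w$i))"
  have v0: "v \<noteq> 0" using w0 by (auto simp: v_def vec_eq_iff)
  have Kv: "cmat K *v v = complex_of_real l *s v"
  proof -
    have "(cmat K *v v)$i = complex_of_real l * v$i" for i
    proof -
      have "(cmat K *v v)$i = complex_of_real ((K *v w)$i)"
        by (simp add: cmat_def v_def matrix_vector_mult_def)
      thus ?thesis using Kw by (simp add: v_def)
    qed
    thus ?thesis by (simp add: vec_eq_iff)
  qed
  have "dsr_char_matrix a b dt K z *v v =
     ((z - 1)^2 + (z * complex_of_real (a*b*dt + b) - complex_of_real b) * complex_of_real l) *s v"
    unfolding char_apply Kv by (simp add: vec_eq_iff algebra_simps)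
  also have "(z - 1)^2 + (z * complex_of_real (a*b*dt + b) - complex_of_real b) * complex_of_real l = 0"
    using r by (simp add: power2_eq_square algebra_simps)
  finally have "dsr_char_matrix a b dt K z *v v = 0" by simp
  thus ?L using det_zero_iff_ker v0 by blast
qed



theorem lemma1:
  fixes K :: "real^'n^'n" and B :: "real^'n" and alpha beta dt :: real
  assumes dt_pos: "dt > 0"
    and K_sym: "transpose K = K"
    and K_pos: "\<forall>l \<in> real_eigenvalues K. l > 0"
  shows "dsr_stable alpha beta dt K \<longleftrightarrow>
           alpha > 0 \<and> 0 < beta \<and>
           beta < 4 / (max_eigenvalue K * (alpha * dt + 2))"
proof -
  define E where "E = real_eigenvalues K"
  define c where "c = alpha * beta * dt"
  define J where "J l = (\<bar>1 - l*beta\<bar> < 1 \<and> 1 + (l*(c + beta) - 2) + (1 - l*beta) > 0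
      \<and> 1 - (l*(c + beta) - 2) + (1 - l*beta) > 0)" for l
  have "dsr_stable alpha beta dt K \<longleftrightarrow>
     (\<forall>l\<in>E. \<forall>z::complex. z^2 + complex_of_real (l*(c + beta) - 2) * z + complex_of_real (1 - l*beta) = 0 \<longrightarrow> cmod z < 1)"
    unfolding dsr_stable_def char_roots[OF K_sym] E_def c_def by blast
  also have "\<dots> \<longleftrightarrow> (\<forall>l\<in>E. J l)"
    unfolding J_def using jury_if jury_only_if by meson
  finally have st: "dsr_stable alpha beta dt K \<longleftrightarrow> (\<forall>l\<in>E. J l)" .
  have fin: "finite E" unfolding E_def by (rule eig_finite[OF K_sym])
  have ne: "E \<noteq> {}" unfolding E_def by (rule eig_exists[OF K_sym])
  define m where "m = max_eigenvalue K"
  have mE: "m \<in> E" unfolding m_def max_eigenvalue_def E_def[symmetric] using fin ne by simp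
  have mge: "l \<le> m" if "l \<in> E" for l
    unfolding m_def max_eigenvalue_def E_def[symmetric] using fin that by simp
  have Epos: "l > 0" if "l \<in> E" for l using K_pos that unfolding E_def by blast
  have m0: "m > 0" using Epos mE by blast
  have Jl: "J l \<longleftrightarrow> 0 < l*beta \<and> l*beta < 2 \<and> l*c > 0 \<and> l*beta*(alpha*dt+2) < 4" for l
    unfolding J_def c_def by (auto simp: algebra_simps abs_less_iff)
  show ?thesis unfolding st m_def[symmetric]
  proof
    assume all: "\<forall>l\<in>E. J l"
    hence Jm: "J m" using mE by blast
    have b0: "beta > 0" using Jm m0 unfolding Jl by (simp add: zero_less_mult_iff)
    have "m * c > 0" using Jm unfolding Jl by simp
    hence "c > 0" using m0 by (simp add: zero_less_mult_iff)
    hence a0: "alpha > 0" using b0 dt_pos unfolding c_def by (simp add: zero_less_mult_iff)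
    have "beta * (m * (alpha*dt+2)) < 4" using Jm unfolding Jl by (simp add: algebra_simps)
    moreover have "m * (alpha*dt+2) > 0" using m0 a0 dt_pos by (intro mult_pos_pos add_pos_pos) auto
    ultimately have "beta < 4 / (m * (alpha*dt+2))" by (simp add: pos_less_divide_eq)
    thus "alpha > 0 \<and> 0 < beta \<and> beta < 4 / (m * (alpha * dt + 2))" using a0 b0 by simp
  next
    assume H: "alpha > 0 \<and> 0 < beta \<and> beta < 4 / (m * (alpha * dt + 2))"
    hence a0: "alpha > 0" and b0: "beta > 0" by auto
    have g: "alpha*dt + 2 > 2" using a0 dt_pos by simp
    have "m * (alpha*dt+2) > 0" using m0 a0 dt_pos by (intro mult_pos_pos add_pos_pos) auto
    hence mb: "beta * (m * (alpha*dt+2)) < 4" using H by (simp add: pos_less_divide_eq)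
    show "\<forall>l\<in>E. J l"
    proof
      fix l assume l: "l \<in> E"
      have l0: "l > 0" using Epos l by blast
      have "l*beta*(alpha*dt+2) \<le> m*beta*(alpha*dt+2)"
        using mge[OF l] b0 g by (intro mult_right_mono) auto
      hence t4: "l*beta*(alpha*dt+2) < 4" using mb by (simp add: algebra_simps)
      have lb0: "l*beta > 0" using l0 b0 by simp
      have "l*beta*2 < l*beta*(alpha*dt+2)" using lb0 g by (intro mult_strict_left_mono) auto
      hence "l*beta < 2" using t4 by simp
      moreover have "l*c > 0" unfolding c_def using l0 a0 b0 dt_pos by simp
      ultimately show "J l" unfolding Jl using lb0 t4 by simp
    qed
  qed
qed


end
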